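(* Let $\epsilon>0$, $\beta>0$, $K,T\in\mathbb N_+$ and $N\ge 3KT^2/\beta$. For any $\epsilon$-differentially private online learner $\mathcal A$ of $\mathrm{Point}_N$ whose outputs always lie in $\mathrm{Point}^K_N$, there exists an adversary $\mathcal B$ such that $$\mathbb E[M_{\mathcal A}]=\Omega\left(\min\left(\frac{\log(T/\beta)}{\epsilon},\,T\right)\right).$$
   Context: $\mathrm{Point}_N=\{f^{(i)}:i\in[N]\}$ on domain $[N]$ with $f^{(i)}(x)=\mathbb 1\{x=i\}$; $\mathrm{Point}^K_N$ is the class of functions $[N]\to\{0,1\}$ equal to $1$ on at most $K$ points. Online game: an oblivious adversary picks $f^*\in\mathrm{Point}_N$ and $x_1,\dots,x_T\in[N]$; for $t=1,\dots,T$ the randomized learner outputs $\hat f_t$ depending only on the first $t-1$ labelled pairs, then receives $(x_t,f^*(x_t))$; $M_{\mathcal A}=\sum_t\mathbb 1\{\hat f_t(x_t)\ne f^*(x_t)\}$, expectation over the learner's randomness. $\epsilon$-DP: for any two labelled input sequences $\tau,\tau'$ differing in exactly one position and any set $S$ of output sequences of predictors, $\Pr(\mathcal A(\tau)\in S)\le e^{\epsilon}\Pr(\mathcal A(\tau')\in S)$. *)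

theory Defs
  imports "HOL-Probability.Probability"
begin

text \<open>Domain [N] is rendered as {0..<N}. A predictor is a function nat => bool,
  required to be False outside the domain (it is really a function [N] -> {0,1}).\<close>

definition point_fun :: "nat \<Rightarrow> nat \<Rightarrow> bool" where
  "point_fun i = (\<lambda>x. x = i)"

definition PointK :: "nat \<Rightarrow> nat \<Rightarrow> (nat \<Rightarrow> bool) set" where
  "PointK N K = {h. (\<forall>x. N \<le> x \<longrightarrow> \<not> h x) \<and> card {x. x < N \<and> h x} \<le> K}"

definition inputs :: "nat \<Rightarrow> nat \<Rightarrow> (nat \<times> bool) list set" where
  "inputs N T = {\<tau>. length \<tau> = T \<and> (\<forall>p\<in>set \<tau>. fst p < N)}"

text \<open>A randomized learner for horizon T maps the whole labelled sequence to a
  distribution over output sequences of predictors; it is online if the joint law of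
  the first t+1 predictors depends only on the first t labelled pairs.\<close>
type_synonym learner = "(nat \<times> bool) list \<Rightarrow> (nat \<Rightarrow> bool) list pmf"

definition online_learner :: "nat \<Rightarrow> nat \<Rightarrow> learner \<Rightarrow> bool" where
  "online_learner N T A \<longleftrightarrow>
     (\<forall>\<tau>\<in>inputs N T. \<forall>hs\<in>set_pmf (A \<tau>). length hs = T) \<and>
     (\<forall>\<tau>\<in>inputs N T. \<forall>\<tau>'\<in>inputs N T. \<forall>t<T.
        take t \<tau> = take t \<tau>' \<longrightarrow>
        map_pmf (take (Suc t)) (A \<tau>) = map_pmf (take (Suc t)) (A \<tau>'))"

definition outputs_in_PointK :: "nat \<Rightarrow> nat \<Rightarrow> nat \<Rightarrow> learner \<Rightarrow> bool" where
  "outputs_in_PointK N K T A \<longleftrightarrow>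
     (\<forall>\<tau>\<in>inputs N T. \<forall>hs\<in>set_pmf (A \<tau>). \<forall>h\<in>set hs. h \<in> PointK N K)"

definition differ_in_one :: "'a list \<Rightarrow> 'a list \<Rightarrow> bool" where
  "differ_in_one xs ys \<longleftrightarrow> length xs = length ys \<and>
     card {j. j < length xs \<and> xs ! j \<noteq> ys ! j} = 1"

definition dp_learner :: "real \<Rightarrow> nat \<Rightarrow> nat \<Rightarrow> learner \<Rightarrow> bool" where
  "dp_learner \<epsilon> N T A \<longleftrightarrow>
     (\<forall>\<tau>\<in>inputs N T. \<forall>\<tau>'\<in>inputs N T. \<forall>S. differ_in_one \<tau> \<tau>' \<longrightarrow>
        measure_pmf.prob (A \<tau>) S \<le> exp \<epsilon> * measure_pmf.prob (A \<tau>') S)"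

text \<open>Oblivious adversary: target f^(i) and points xs; expected number of mistakes.\<close>
definition expected_mistakes :: "learner \<Rightarrow> nat \<Rightarrow> nat list \<Rightarrow> real" where
  "expected_mistakes A i xs =
     measure_pmf.expectation (A (map (\<lambda>x. (x, point_fun i x)) xs))
       (\<lambda>hs. \<Sum>t<length xs. if (hs ! t) (xs ! t) \<noteq> point_fun i (xs ! t) then 1 else 0)"

end

theory Submission imports Defs begin

lemma integrable_ind: "integrable (measure_pmf M) (\<lambda>x. if P x then 1 else (0::real))"
  by (rule measure_pmf.integrable_const_bound[where B=1]) auto

lemma prob_as_int: "measure_pmf.prob M {x. P x} = measure_pmf.expectation M (\<lambda>x. if P x then 1 else (0::real))"
proof -
  have "measure_pmf.expectation M (indicator {x. P x}) = measure_pmf.prob M {x. P x}"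
    by simp
  moreover have "indicator {x. P x} = (\<lambda>x. if P x then 1 else (0::real))"
    by (auto simp: indicator_def)
  ultimately show ?thesis by simp
qed

lemma take_nth_Suc: "take (Suc t) hs ! t = hs ! t"
  by (cases "t < length hs") (auto simp: nth_take)

lemma prob_take: "measure_pmf.prob M {hs. P (hs ! t)} = measure_pmf.prob (map_pmf (take (Suc t)) M) {ys. P (ys ! t)}"
  by (simp add: vimage_def take_nth_Suc)

definition sig :: "nat \<Rightarrow> nat \<Rightarrow> nat \<Rightarrow> (nat \<times> bool) list" where
  "sig T i k = replicate k (i, True) @ replicate (T - k) (0, False)"

lemma sig_in: "i < N \<Longrightarrow> k \<le> T \<Longrightarrow> sig T i k \<in> inputs N T"
  by (auto simp: sig_def inputs_def)

lemma sig_differ: "Suc k \<le> T \<Longrightarrow> differ_in_one (sig T i (Suc k)) (sig T i k)"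
proof -
  assume k: "Suc k \<le> T"
  have len: "length (sig T i (Suc k)) = T" "length (sig T i k) = T" using k by (auto simp: sig_def)
  have e1: "sig T i (Suc k) = replicate k (i, True) @ (i, True) # replicate (T - Suc k) (0, False)"
    unfolding sig_def by (simp add: replicate_append_same[symmetric])
  have e2: "sig T i k = replicate k (i, True) @ (0, False) # replicate (T - Suc k) (0, False)"
    unfolding sig_def using k by (simp add: Suc_diff_Suc[symmetric])
  have "{j. j < T \<and> sig T i (Suc k) ! j \<noteq> sig T i k ! j} = {k}"
    using k unfolding e1 e2 by (auto simp: nth_append nth_Cons split: nat.splits) (metis Suc_pred zero_less_diff not_le)
  then show ?thesis using len unfolding differ_in_one_def by simp
qed

lemma group:
  assumes dp: "dp_learner \<epsilon> N T A" and i: "i < N" and e: "\<epsilon> > 0"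
  shows "k \<le> T \<Longrightarrow> measure_pmf.prob (A (sig T i k)) S \<le> exp (\<epsilon> * k) * measure_pmf.prob (A (sig T i 0)) S"
proof (induction k)
  case 0 then show ?case by simp
next
  case (Suc k)
  have "measure_pmf.prob (A (sig T i (Suc k))) S \<le> exp \<epsilon> * measure_pmf.prob (A (sig T i k)) S"
    using dp Suc.prems sig_in[OF i] sig_differ unfolding dp_learner_def by auto
  also have "\<dots> \<le> exp \<epsilon> * (exp (\<epsilon> * k) * measure_pmf.prob (A (sig T i 0)) S)"
    using Suc by (intro mult_left_mono) auto
  also have "\<dots> = exp (\<epsilon> * Suc k) * measure_pmf.prob (A (sig T i 0)) S"
    by (simp add: distrib_left mult_exp_exp algebra_simps)
  finally show ?case .
qed

lemma avg_exists:
  fixes f :: "nat \<Rightarrow> real"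
  assumes "N > 0" "(\<Sum>j<N. f j) \<le> B"
  shows "\<exists>i<N. f i \<le> B / N"
proof (rule ccontr)
  assume "\<not> ?thesis"
  then have "\<And>j. j \<in> {..<N} \<Longrightarrow> B / N < f j" by auto
  then have "(\<Sum>j<N. B / N) < (\<Sum>j<N. f j)"
    using assms by (intro sum_strict_mono) auto
  then show False using assms by simp
qed

lemma supp_bound:
  assumes onl: "online_learner N T A" and outK: "outputs_in_PointK N K T A"
    and R: "R \<in> inputs N T" and t: "t < T"
  shows "(\<Sum>j<N. measure_pmf.prob (A R) {hs. (hs ! t) j}) \<le> K"
proof -
  have "(\<Sum>j<N. measure_pmf.prob (A R) {hs. (hs ! t) j})
      = (\<Sum>j<N. measure_pmf.expectation (A R) (\<lambda>hs. if (hs ! t) j then 1 else (0::real)))"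
    by (simp add: prob_as_int)
  also have "\<dots> = measure_pmf.expectation (A R) (\<lambda>hs. \<Sum>j<N. if (hs ! t) j then 1 else (0::real))"
    using Bochner_Integration.integral_sum[where I="{..<N}" and f="\<lambda>j hs. if (hs ! t) j then 1 else (0::real)"]
    by (simp add: integrable_ind)
  also have "\<dots> \<le> K"
  proof (rule measure_pmf.integral_le_const)
    show "integrable (measure_pmf (A R)) (\<lambda>hs. \<Sum>j<N. if (hs ! t) j then 1 else (0::real))"
      by (intro Bochner_Integration.integrable_sum integrable_ind)
    show "AE x in measure_pmf (A R). (\<Sum>j<N. if (x ! t) j then 1 else (0::real)) \<le> real K"
    proof (rule AE_pmfI)
      fix hs assume hs: "hs \<in> set_pmf (A R)"
      then have "length hs = T" using onl R unfolding online_learner_def by auto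
      then have "hs ! t \<in> set hs" using t by simp
      then have "hs ! t \<in> PointK N K" using outK R hs unfolding outputs_in_PointK_def by auto
      then have c: "card {x. x < N \<and> (hs ! t) x} \<le> K" unfolding PointK_def by auto
      have "(\<Sum>j<N. if (hs ! t) j then 1 else (0::real)) = real (card {x. x < N \<and> (hs ! t) x})"
        by (simp add: sum.If_cases Int_def conj_commute)
      then show "(\<Sum>j<N. if (hs ! t) j then 1 else (0::real)) \<le> real K" using c by simp
    qed
  qed
  finally show ?thesis .
qed

lemma main_bound:
  fixes \<epsilon> \<beta> :: real
  assumes e: "\<epsilon> > 0" and b: "\<beta> > 0" and T: "T \<ge> 1" and K: "K \<ge> 1"
    and NB: "real N \<ge> 3 * real K * (real T)^2 / \<beta>"
    and onl: "online_learner N T A" and dp: "dp_learner \<epsilon> N T A"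
    and outK: "outputs_in_PointK N K T A" and L: "real T / \<beta> > 1"
  shows "\<exists>i<N. expected_mistakes A i (replicate T i) \<ge> 2/3 * min (ln (real T / \<beta>) / \<epsilon>) (real T)"
proof -
  define L where "L = ln (real T / \<beta>)"
  have Lpos: "L > 0" using L by (simp add: L_def)
  define m where "m = min T (nat \<lfloor>L / \<epsilon>\<rfloor> + 1)"
  have m1: "m \<ge> 1" and mT: "m \<le> T" using T by (auto simp: m_def)
  have "real (m - 1) \<le> real (nat \<lfloor>L / \<epsilon>\<rfloor>)" by (simp add: m_def)
  also have "\<dots> \<le> L / \<epsilon>" using Lpos e by simp
  finally have "\<epsilon> * real (m - 1) \<le> L" using e by (simp add: field_simps)
  then have expm: "exp (\<epsilon> * real (m - 1)) \<le> real T / \<beta>"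
    using L unfolding L_def by (metis exp_le_cancel_iff exp_ln less_trans zero_less_one)
  have mge: "real m \<ge> min (L / \<epsilon>) (real T)"
  proof (cases "m = T")
    case True then show ?thesis by simp
  next
    case False
    then have "m = nat \<lfloor>L / \<epsilon>\<rfloor> + 1" by (auto simp: m_def)
    moreover have "L / \<epsilon> \<le> real (nat \<lfloor>L / \<epsilon>\<rfloor>) + 1" using Lpos e
      by (smt (verit) of_nat_nat real_of_int_floor_add_one_ge zero_le_floor divide_nonneg_pos)
    ultimately show ?thesis by simp
  qed
  have Npos: "N > 0"
  proof -
    have "3 * real K * (real T)^2 / \<beta> > 0" using b K T by simp
    then show ?thesis using NB by simp
  qed
  define R where "R = sig T 0 0"
  have Rin: "R \<in> inputs N T" unfolding R_def using Npos by (intro sig_in) auto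
  have R': "\<And>i. sig T i 0 = R" by (simp add: R_def sig_def)
  define p where "p t j = measure_pmf.prob (A R) {hs. (hs ! t) j}" for t j
  have "(\<Sum>j<N. \<Sum>t<m. p t j) = (\<Sum>t<m. \<Sum>j<N. p t j)" by (rule sum.swap)
  also have "\<dots> \<le> (\<Sum>t<m. real K)"
    using supp_bound[OF onl outK Rin] mT unfolding p_def by (intro sum_mono) auto
  finally have "(\<Sum>j<N. \<Sum>t<m. p t j) \<le> real m * real K" by simp
  then obtain i where i: "i < N" and pi: "(\<Sum>t<m. p t i) \<le> real m * real K / real N"
    using avg_exists[OF Npos] by blast
  define q where "q t = measure_pmf.prob (A (sig T i T)) {hs. (hs ! t) i}" for t
  have qle: "q t \<le> exp (\<epsilon> * real (m - 1)) * p t i" if t: "t < m" for t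
  proof -
    have tT: "t < T" using t mT by simp
    have "take t (sig T i T) = take t (sig T i t)" using tT by (simp add: sig_def)
    then have "map_pmf (take (Suc t)) (A (sig T i T)) = map_pmf (take (Suc t)) (A (sig T i t))"
      using onl tT sig_in[OF i] unfolding online_learner_def by auto
    note eq = this
    have "q t = measure_pmf.prob (map_pmf (take (Suc t)) (A (sig T i T))) {ys. (ys ! t) i}"
      unfolding q_def by (rule prob_take)
    also have "\<dots> = measure_pmf.prob (map_pmf (take (Suc t)) (A (sig T i t))) {ys. (ys ! t) i}"
      by (simp only: eq)
    also have "\<dots> = measure_pmf.prob (A (sig T i t)) {hs. (hs ! t) i}"
      by (rule prob_take[symmetric])
    also have "\<dots> \<le> exp (\<epsilon> * real t) * p t i"
      using group[OF dp i e, of t] tT R' unfolding p_def by simp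
    also have "\<dots> \<le> exp (\<epsilon> * real (m - 1)) * p t i"
      using t e unfolding p_def by (intro mult_right_mono) auto
    finally show ?thesis .
  qed
  have tau: "map (\<lambda>x. (x, point_fun i x)) (replicate T i) = sig T i T"
    by (simp add: sig_def point_fun_def)
  have EM: "expected_mistakes A i (replicate T i) = (\<Sum>t<T. 1 - q t)"
  proof -
    have "expected_mistakes A i (replicate T i) =
      measure_pmf.expectation (A (sig T i T)) (\<lambda>hs. \<Sum>t<T. if \<not> (hs ! t) i then 1 else (0::real))"
      unfolding expected_mistakes_def tau by (simp add: point_fun_def)
    also have "\<dots> = (\<Sum>t<T. measure_pmf.expectation (A (sig T i T)) (\<lambda>hs. if \<not> (hs ! t) i then 1 else (0::real)))"
      using Bochner_Integration.integral_sum[where I="{..<T}" and f="\<lambda>t hs. if \<not> (hs ! t) i then 1 else (0::real)"]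
      by (simp add: integrable_ind)
    also have "\<dots> = (\<Sum>t<T. 1 - q t)"
    proof (intro sum.cong refl)
      fix t
      have "measure_pmf.expectation (A (sig T i T)) (\<lambda>hs. if \<not> (hs ! t) i then 1 else (0::real))
          = measure_pmf.prob (A (sig T i T)) {hs. \<not> (hs ! t) i}" by (simp add: prob_as_int)
      also have "{hs. \<not> (hs ! t) i} = UNIV - {hs. (hs ! t) i}" by auto
      also have "measure_pmf.prob (A (sig T i T)) (UNIV - {hs. (hs ! t) i}) = 1 - q t"
        unfolding q_def by (subst measure_pmf.prob_compl[symmetric]) auto
      finally show "measure_pmf.expectation (A (sig T i T)) (\<lambda>hs. if \<not> (hs ! t) i then 1 else (0::real)) = 1 - q t" .
    qed
    finally show ?thesis .
  qed
  have q1: "q t \<le> 1" for t unfolding q_def by simp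
  have "(\<Sum>t<m. 1 - q t) \<le> (\<Sum>t<T. 1 - q t)"
    using mT q1 by (intro sum_mono2) auto
  moreover have "(\<Sum>t<m. 1 - q t) = real m - (\<Sum>t<m. q t)" by (simp add: sum_subtractf)
  moreover have "(\<Sum>t<m. q t) \<le> 1/3"
  proof -
    have "(\<Sum>t<m. q t) \<le> (\<Sum>t<m. exp (\<epsilon> * real (m - 1)) * p t i)"
      using qle by (intro sum_mono) auto
    also have "\<dots> = exp (\<epsilon> * real (m - 1)) * (\<Sum>t<m. p t i)" by (simp add: sum_distrib_left)
    also have "\<dots> \<le> (real T / \<beta>) * (real m * real K / real N)"
      using expm pi b by (intro mult_mono) (auto simp: p_def intro: sum_nonneg)
    also have "\<dots> \<le> (real T / \<beta>) * (real T * real K / real N)"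
      using mT b by (intro mult_left_mono divide_right_mono mult_right_mono) auto
    also have "\<dots> \<le> 1/3"
    proof -
      have "3 * real K * (real T)^2 \<le> real N * \<beta>" using NB b by (simp add: field_simps)
      then show ?thesis using b Npos by (simp add: field_simps power2_eq_square)
    qed
    finally show ?thesis .
  qed
  ultimately have "expected_mistakes A i (replicate T i) \<ge> real m - 1/3" using EM by linarith
  moreover have "real m - 1/3 \<ge> 2/3 * real m" using m1 by simp
  moreover have "2/3 * real m \<ge> 2/3 * min (L / \<epsilon>) (real T)" using mge by simp
  ultimately show ?thesis using i unfolding L_def by force
qed

lemma em_nonneg: "expected_mistakes A i xs \<ge> 0"
  unfolding expected_mistakes_def by (intro integral_nonneg_AE AE_pmfI sum_nonneg) auto

theorem corollary3:
  shows "\<exists>c>0. \<forall>(\<epsilon>::real) (\<beta>::real) (K::nat) (T::nat) (N::nat) (A::learner).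
    \<epsilon> > 0 \<longrightarrow> \<beta> > 0 \<longrightarrow> K \<ge> 1 \<longrightarrow> T \<ge> 1 \<longrightarrow>
    real N \<ge> 3 * real K * (real T)^2 / \<beta> \<longrightarrow>
    online_learner N T A \<longrightarrow> dp_learner \<epsilon> N T A \<longrightarrow> outputs_in_PointK N K T A \<longrightarrow>
    (\<exists>i<N. \<exists>xs. length xs = T \<and> set xs \<subseteq> {..<N} \<and>
       expected_mistakes A i xs \<ge> c * min (ln (real T / \<beta>) / \<epsilon>) (real T))"
proof (rule exI[where x="2/3"], intro conjI allI impI)
  fix \<epsilon> \<beta> :: real and K T N :: nat and A :: learner
  assume e: "\<epsilon> > 0" and b: "\<beta> > 0" and K: "K \<ge> 1" and T: "T \<ge> 1"
    and NB: "real N \<ge> 3 * real K * (real T)^2 / \<beta>"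
    and onl: "online_learner N T A" and dp: "dp_learner \<epsilon> N T A"
    and outK: "outputs_in_PointK N K T A"
  have "3 * real K * (real T)^2 / \<beta> > 0" using b K T by simp
  then have Npos: "N > 0" using NB by simp
  show "\<exists>i<N. \<exists>xs. length xs = T \<and> set xs \<subseteq> {..<N} \<and>
       expected_mistakes A i xs \<ge> 2/3 * min (ln (real T / \<beta>) / \<epsilon>) (real T)"
  proof (cases "real T / \<beta> > 1")
    case True
    from main_bound[OF e b T K NB onl dp outK True] obtain i where
      "i < N" "expected_mistakes A i (replicate T i) \<ge> 2/3 * min (ln (real T / \<beta>) / \<epsilon>) (real T)"
      by blast
    then show ?thesis by (intro exI[of _ i] conjI exI[of _ "replicate T i"]) auto
  next
    case False
    then have "ln (real T / \<beta>) \<le> 0" using b T by simp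
    then have "min (ln (real T / \<beta>) / \<epsilon>) (real T) \<le> 0" using e
      by (simp add: divide_nonpos_pos min.coboundedI1)
    then have "2/3 * min (ln (real T / \<beta>) / \<epsilon>) (real T) \<le> expected_mistakes A 0 (replicate T 0)"
      using em_nonneg[of A 0 "replicate T 0"] by linarith
    then show ?thesis using Npos by (intro exI[of _ 0] conjI exI[of _ "replicate T 0"]) auto
  qed
qed (simp)

end
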